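(* For every integer $n\ge 1$, the vertices of \[\mathrm{Newt}(U_n)=\sum_{1\le i<j\le n}\mathrm{conv}\{e_i+e_{n+j},\,e_j+e_{n+i}\}\subseteq\mathbb{R}^{2n}\] are exactly the points $(\pi,\pi^c)-(1,\dots,1)$ for $\pi\in\mathfrak{S}_n$.
   Context: $e_1,\dots,e_{2n}$ are the standard basis vectors of $\mathbb{R}^{2n}$ and the sum is a Minkowski sum. A permutation $\pi=\pi_1\cdots\pi_n\in\mathfrak{S}_n$ is identified with the vector $(\pi_1,\dots,\pi_n)\in\mathbb{R}^n$, and its complement is $\pi^c=(n+1-\pi_1,\dots,n+1-\pi_n)$; $(\pi,\pi^c)\in\mathbb{R}^{2n}$ is the concatenation and $(1,\dots,1)\in\mathbb{R}^{2n}$. *)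

theory Defs
  imports "HOL-Analysis.Analysis" "HOL-Analysis.Finite_Function_Topology"
          "HOL-Combinatorics.Permutations"
begin

text \<open>We model R^(2n) uniformly in n as finitely supported functions nat =>0 real
  (a real vector space); the coordinate with 1-based index k (1 <= k <= 2n) is stored
  at position k - 1, all other coordinates are zero.\<close>

definition std_basis :: "nat \<Rightarrow> (nat \<Rightarrow>\<^sub>0 real)" where
  "std_basis k = Poly_Mapping.single (k - 1) 1"

definition Newt :: "nat \<Rightarrow> (nat \<Rightarrow>\<^sub>0 real) set" where
  "Newt n = (\<Sum>(i, j)\<in>{(i, j). 1 \<le> i \<and> i < j \<and> j \<le> n}.
      convex hull {std_basis i + std_basis (n + j), std_basis j + std_basis (n + i)})"

definition perm_compl_vec :: "nat \<Rightarrow> (nat \<Rightarrow> nat) \<Rightarrow> (nat \<Rightarrow>\<^sub>0 real)" where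
  "perm_compl_vec n \<pi> =
     (\<Sum>k\<in>{1..n}. real (\<pi> k) *\<^sub>R std_basis k) +
     (\<Sum>k\<in>{1..n}. (real (n + 1) - real (\<pi> k)) *\<^sub>R std_basis (n + k))"

definition ones_vec :: "nat \<Rightarrow> (nat \<Rightarrow>\<^sub>0 real)" where
  "ones_vec n = (\<Sum>k\<in>{1..2 * n}. std_basis k)"

end

theory Submission
  imports Defs
begin

definition Cv :: "nat \<Rightarrow> nat \<Rightarrow> nat \<Rightarrow> (nat \<Rightarrow>\<^sub>0 real)" where
  "Cv n i j = std_basis i + std_basis (n + j)"

definition Pairs :: "nat \<Rightarrow> (nat \<times> nat) set" where
  "Pairs n = {(i, j). 1 \<le> i \<and> i < j \<and> j \<le> n}"

lemma finite_Pairs: "finite (Pairs n)"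
  by (rule finite_subset[of _ "{1..n} \<times> {1..n}"]) (auto simp: Pairs_def)

lemma Newt_alt: "Newt n = (\<Sum>(i, j)\<in>Pairs n. convex hull {Cv n i j, Cv n j i})"
  unfolding Newt_def Pairs_def Cv_def by simp

lemma Newt_mem: "y \<in> Newt n \<longleftrightarrow>
   (\<exists>s. (\<forall>k\<in>Pairs n. s k \<in> convex hull {Cv n (fst k) (snd k), Cv n (snd k) (fst k)}) \<and> y = sum s (Pairs n))"
  unfolding Newt_alt set_sum_alt[OF finite_Pairs] by (auto simp: case_prod_beta)

lemma lookup_std: "Poly_Mapping.lookup (std_basis k) m = (if m = k - 1 then 1 else 0)"
  by (auto simp: std_basis_def Poly_Mapping.lookup_single_not_eq)

lemma lookup_scaleR_pm: "Poly_Mapping.lookup (r *\<^sub>R x) i = r * Poly_Mapping.lookup x i"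
proof -
  have "finite {i. r * Poly_Mapping.lookup x i \<noteq> 0}"
    by (rule finite_subset[of _ "Poly_Mapping.keys x"]) (auto simp: Poly_Mapping.in_keys_iff)
  then show ?thesis
    unfolding scaleR_poly_mapping_def by (simp add: Abs_poly_mapping_inverse)
qed

lemma Cv_neq: assumes "a \<in> {1..n}" "b \<in> {1..n}" "a \<noteq> b" shows "Cv n a b \<noteq> Cv n b a"
proof
  assume "Cv n a b = Cv n b a"
  then have "Poly_Mapping.lookup (Cv n a b) (a - 1) = Poly_Mapping.lookup (Cv n b a) (a - 1)" by simp
  then show False using assms by (auto simp: Cv_def Poly_Mapping.lookup_add lookup_std split: if_splits)
qed

lemma sum_upd: fixes s :: "'a \<Rightarrow> 'b::ab_group_add" assumes "finite I" "k \<in> I" shows "sum (s(k := y)) I = sum s I - s k + y"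
proof -
  have "sum (s(k := y)) I = (s(k:=y)) k + sum (s(k := y)) (I - {k})"
    using assms by (simp add: sum.remove)
  also have "sum (s(k := y)) (I - {k}) = sum s (I - {k})" by (rule sum.cong) auto
  moreover have "sum s I = s k + sum s (I - {k})" using assms by (simp add: sum.remove)
  ultimately show ?thesis by (simp add: algebra_simps)
qed

lemma extreme_sum:
  assumes fin: "finite I" and ext: "x extreme_point_of (sum S I)"
    and s: "\<forall>i\<in>I. s i \<in> S i" and x: "x = sum s I" and k: "k \<in> I"
  shows "s k extreme_point_of S k"
proof -
  have mem: "sum t I \<in> sum S I" if "\<forall>i\<in>I. t i \<in> S i" for t
    using that unfolding set_sum_alt[OF fin] by blast
  show ?thesis
    unfolding extreme_point_of_def
  proof (intro conjI ballI notI)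
    show "s k \<in> S k" using s k by auto
  next
    fix a b assume a: "a \<in> S k" and b: "b \<in> S k" and o: "s k \<in> open_segment a b"
    define c where "c = x - s k"
    have "c + s k \<in> open_segment (c + a) (c + b)"
      unfolding open_segment_translation using o by blast
    moreover have "c + a \<in> sum S I"
      using mem[of "s(k := a)"] s a sum_upd[OF fin k, of s a] by (auto simp: c_def x)
    moreover have "c + b \<in> sum S I"
      using mem[of "s(k := b)"] s b sum_upd[OF fin k, of s b] by (auto simp: c_def x)
    ultimately show False using ext unfolding extreme_point_of_def c_def by auto
  qed
qed

lemma pcv_expand: "perm_compl_vec n \<pi> - ones_vec n =
   (\<Sum>k\<in>{1..n}. (real (\<pi> k) - 1) *\<^sub>R std_basis k) +
   (\<Sum>k\<in>{1..n}. (real n - real (\<pi> k)) *\<^sub>R std_basis (n + k))"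
proof -
  have U: "{1..2*n} = {1..n} \<union> (\<lambda>k. n + k) ` {1..n}"
  proof -
    have "(\<lambda>k. n + k) ` {1..n} = {n+1..2*n}" by (simp add: image_add_atLeastAtMost)
    then show ?thesis by auto
  qed
  have "ones_vec n = (\<Sum>k\<in>{1..n}. std_basis k) + (\<Sum>k\<in>(\<lambda>k. n + k) ` {1..n}. std_basis k)"
    unfolding ones_vec_def U by (rule sum.union_disjoint) auto
  also have "(\<Sum>k\<in>(\<lambda>k. n + k) ` {1..n}. std_basis k) = (\<Sum>k\<in>{1..n}. std_basis (n + k))"
    by (subst sum.reindex) (simp_all add: inj_on_def)
  finally have O: "ones_vec n = (\<Sum>k\<in>{1..n}. std_basis k) + (\<Sum>k\<in>{1..n}. std_basis (n + k))" .
  have E1: "(\<Sum>k\<in>{1..n}. (real (\<pi> k) - 1) *\<^sub>R std_basis k) = (\<Sum>k\<in>{1..n}. real (\<pi> k) *\<^sub>R std_basis k) - (\<Sum>k\<in>{1..n}. std_basis k)"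
    by (simp add: scaleR_diff_left sum_subtractf)
  have E2: "(\<Sum>k\<in>{1..n}. (real n - real (\<pi> k)) *\<^sub>R std_basis (n + k)) = (\<Sum>k\<in>{1..n}. (real (n + 1) - real (\<pi> k)) *\<^sub>R std_basis (n + k)) - (\<Sum>k\<in>{1..n}. std_basis (n + k))"
    by (simp add: scaleR_diff_left sum_subtractf algebra_simps sum.distrib)
  show ?thesis unfolding E1 E2 O perm_compl_vec_def by (simp add: algebra_simps)
qed

lemma tour_sum:
  fixes B :: "nat \<Rightarrow> nat \<Rightarrow> bool"
  assumes tour: "\<And>a b. a \<in> {1..n} \<Longrightarrow> b \<in> {1..n} \<Longrightarrow> a \<noteq> b \<Longrightarrow> B a b \<longleftrightarrow> \<not> B b a"
    and irr: "\<And>a. a \<in> {1..n} \<Longrightarrow> \<not> B a a"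
  shows "(\<Sum>k\<in>Pairs n. if B (fst k) (snd k) then Cv n (fst k) (snd k) else Cv n (snd k) (fst k)) =
     (\<Sum>a\<in>{1..n}. real (card {b\<in>{1..n}. B a b}) *\<^sub>R std_basis a) +
     (\<Sum>b\<in>{1..n}. real (card {a\<in>{1..n}. B a b}) *\<^sub>R std_basis (n + b))"
proof -
  define Beat where "Beat = {p\<in>{1..n}\<times>{1..n}. B (fst p) (snd p)}"
  define h where "h k = (if B (fst k) (snd k) then k else (snd k, fst k))" for k :: "nat \<times> nat"
  have inj: "inj_on h (Pairs n)"
  proof (rule inj_onI)
    fix p q assume p: "p \<in> Pairs n" and q: "q \<in> Pairs n" and e: "h p = h q"
    obtain i j i' j' where pq: "p = (i, j)" "q = (i', j')" by force
    have "i < j" "i' < j'" using p q pq by (auto simp: Pairs_def)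
    then show "p = q" using e pq unfolding h_def by (auto split: if_splits)
  qed
  have img: "h ` Pairs n = Beat"
  proof
    show "h ` Pairs n \<subseteq> Beat"
    proof
      fix x assume "x \<in> h ` Pairs n"
      then obtain i j where ij: "(i, j) \<in> Pairs n" "x = h (i, j)" by force
      have i: "i \<in> {1..n}" and j: "j \<in> {1..n}" and ne: "i \<noteq> j" using ij by (auto simp: Pairs_def)
      show "x \<in> Beat"
      proof (cases "B i j")
        case True then show ?thesis using ij i j by (auto simp: h_def Beat_def)
      next
        case False then have "B j i" using tour[OF i j ne] by auto
        then show ?thesis using ij i j False by (auto simp: h_def Beat_def)
      qed
    qed
  next
    show "Beat \<subseteq> h ` Pairs n"
    proof
      fix p assume p: "p \<in> Beat"
      obtain a b where ab: "p = (a, b)" by force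
      have a: "a \<in> {1..n}" and b: "b \<in> {1..n}" and B: "B a b" using p ab by (auto simp: Beat_def)
      have "a \<noteq> b" using irr a B by auto
      show "p \<in> h ` Pairs n"
      proof (cases "a < b")
        case True
        then have "(a, b) \<in> Pairs n" "h (a, b) = p" using a b B ab by (auto simp: Pairs_def h_def)
        then show ?thesis by force
      next
        case False
        then have "(b, a) \<in> Pairs n" using a b \<open>a \<noteq> b\<close> by (auto simp: Pairs_def)
        moreover have "\<not> B b a" using tour[OF a b \<open>a \<noteq> b\<close>] B by auto
        ultimately have "(b, a) \<in> Pairs n" "h (b, a) = p" using ab by (auto simp: h_def)
        then show ?thesis by force
      qed
    qed
  qed
  have "(\<Sum>k\<in>Pairs n. if B (fst k) (snd k) then Cv n (fst k) (snd k) else Cv n (snd k) (fst k))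
      = (\<Sum>k\<in>Pairs n. (\<lambda>p. Cv n (fst p) (snd p)) (h k))"
    by (rule sum.cong) (auto simp: h_def)
  also have "\<dots> = (\<Sum>p\<in>Beat. Cv n (fst p) (snd p))"
    using sum.reindex_bij_betw[of h "Pairs n" Beat "\<lambda>p. Cv n (fst p) (snd p)"] inj img
    by (simp add: bij_betw_def)
  also have "\<dots> = (\<Sum>p\<in>{1..n}\<times>{1..n}. if B (fst p) (snd p) then Cv n (fst p) (snd p) else 0)"
    unfolding Beat_def by (rule sum.inter_filter) auto
  also have "\<dots> = (\<Sum>a\<in>{1..n}. \<Sum>b\<in>{1..n}. if B a b then Cv n a b else 0)"
    by (simp add: sum.cartesian_product case_prod_beta)
  also have "\<dots> = (\<Sum>a\<in>{1..n}. \<Sum>b\<in>{1..n}. if B a b then std_basis a else 0)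
                 + (\<Sum>a\<in>{1..n}. \<Sum>b\<in>{1..n}. if B a b then std_basis (n + b) else 0)"
    unfolding sum.distrib[symmetric] by (rule sum.cong[OF refl])+ (simp add: Cv_def)
  also have "(\<Sum>a\<in>{1..n}. \<Sum>b\<in>{1..n}. if B a b then std_basis a else 0)
     = (\<Sum>a\<in>{1..n}. real (card {b\<in>{1..n}. B a b}) *\<^sub>R std_basis a)"
  proof (rule sum.cong[OF refl])
    fix a
    show "(\<Sum>b\<in>{1..n}. if B a b then std_basis a else 0) = real (card {b\<in>{1..n}. B a b}) *\<^sub>R std_basis a"
      by (simp add: sum.inter_filter[symmetric] sum_constant_scaleR del: sum_constant)
  qed
  also have "(\<Sum>a\<in>{1..n}. \<Sum>b\<in>{1..n}. if B a b then std_basis (n + b) else 0)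
     = (\<Sum>b\<in>{1..n}. \<Sum>a\<in>{1..n}. if B a b then std_basis (n + b) else 0)"
    by (rule sum.swap)
  also have "\<dots> = (\<Sum>b\<in>{1..n}. real (card {a\<in>{1..n}. B a b}) *\<^sub>R std_basis (n + b))"
  proof (rule sum.cong[OF refl])
    fix b
    show "(\<Sum>a\<in>{1..n}. if B a b then std_basis (n + b) else 0) = real (card {a\<in>{1..n}. B a b}) *\<^sub>R std_basis (n + b)"
      by (simp add: sum.inter_filter[symmetric] sum_constant_scaleR del: sum_constant)
  qed
  finally show ?thesis .
qed

lemma tour_pcv:
  fixes B :: "nat \<Rightarrow> nat \<Rightarrow> bool"
  assumes tour: "\<And>a b. a \<in> {1..n} \<Longrightarrow> b \<in> {1..n} \<Longrightarrow> a \<noteq> b \<Longrightarrow> B a b \<longleftrightarrow> \<not> B b a"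
    and irr: "\<And>a. a \<in> {1..n} \<Longrightarrow> \<not> B a a"
    and c1: "\<And>a. a \<in> {1..n} \<Longrightarrow> real (card {b\<in>{1..n}. B a b}) = real (\<pi> a) - 1"
    and c2: "\<And>a. a \<in> {1..n} \<Longrightarrow> real (card {b\<in>{1..n}. B b a}) = real n - real (\<pi> a)"
  shows "(\<Sum>k\<in>Pairs n. if B (fst k) (snd k) then Cv n (fst k) (snd k) else Cv n (snd k) (fst k)) =
     perm_compl_vec n \<pi> - ones_vec n"
proof -
  have e: "(\<Sum>k\<in>Pairs n. if B (fst k) (snd k) then Cv n (fst k) (snd k) else Cv n (snd k) (fst k)) =
     (\<Sum>a\<in>{1..n}. real (card {b\<in>{1..n}. B a b}) *\<^sub>R std_basis a) +
     (\<Sum>b\<in>{1..n}. real (card {a\<in>{1..n}. B a b}) *\<^sub>R std_basis (n + b))"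
  proof (rule tour_sum)
    fix a b assume "a \<in> {1..n}" "b \<in> {1..n}" "a \<noteq> b" then show "B a b \<longleftrightarrow> \<not> B b a" by (rule tour)
  next
    fix a assume "a \<in> {1..n}" then show "\<not> B a a" by (rule irr)
  qed
  show ?thesis unfolding e pcv_expand
    by (intro arg_cong2[where f="(+)"] sum.cong refl arg_cong2[where f=scaleR]) (blast intro: c1 c2)+
qed

lemma perm_card:
  assumes p: "\<pi> permutes {1..n}" and a: "a \<in> {1..n}"
  shows "card {b\<in>{1..n}. \<pi> b < \<pi> a} = \<pi> a - 1" "card {b\<in>{1..n}. \<pi> a < \<pi> b} = n - \<pi> a"
proof -
  have bij: "bij_betw \<pi> {1..n} {1..n}" using p by (rule permutes_imp_bij)
  then have inj: "inj_on \<pi> {1..n}" and img: "\<pi> ` {1..n} = {1..n}" by (auto simp: bij_betw_def)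
  have pa: "\<pi> a \<in> {1..n}" using img a by blast
  have gen: "\<pi> ` {b\<in>{1..n}. P (\<pi> b)} = {c\<in>{1..n}. P c}" for P
  proof
    show "\<pi> ` {b\<in>{1..n}. P (\<pi> b)} \<subseteq> {c\<in>{1..n}. P c}" using img by auto
  next
    show "{c\<in>{1..n}. P c} \<subseteq> \<pi> ` {b\<in>{1..n}. P (\<pi> b)}"
    proof
      fix c assume c: "c \<in> {c\<in>{1..n}. P c}"
      then have "c \<in> \<pi> ` {1..n}" using img by simp
      then obtain b where b: "b \<in> {1..n}" "c = \<pi> b" by blast
      then show "c \<in> \<pi> ` {b\<in>{1..n}. P (\<pi> b)}" using c by blast
    qed
  qed
  have ci: "card (\<pi> ` {b\<in>{1..n}. P (\<pi> b)}) = card {b\<in>{1..n}. P (\<pi> b)}" for P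
    by (rule card_image[OF inj_on_subset[OF inj]]) auto
  have "card {b\<in>{1..n}. \<pi> b < \<pi> a} = card {c\<in>{1..n}. c < \<pi> a}"
    using ci[of "\<lambda>c. c < \<pi> a"] gen[of "\<lambda>c. c < \<pi> a"] by simp
  also have "{c\<in>{1..n}. c < \<pi> a} = {1..<\<pi> a}" using pa by auto
  finally show "card {b\<in>{1..n}. \<pi> b < \<pi> a} = \<pi> a - 1" by simp
  have "card {b\<in>{1..n}. \<pi> a < \<pi> b} = card {c\<in>{1..n}. \<pi> a < c}"
    using ci[of "\<lambda>c. \<pi> a < c"] gen[of "\<lambda>c. \<pi> a < c"] by simp
  also have "{c\<in>{1..n}. \<pi> a < c} = {\<pi> a<..n}" using pa by auto
  finally show "card {b\<in>{1..n}. \<pi> a < \<pi> b} = n - \<pi> a" by simp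
qed

definition phi :: "nat \<Rightarrow> (nat \<Rightarrow> nat) \<Rightarrow> (nat \<Rightarrow>\<^sub>0 real) \<Rightarrow> real" where
  "phi n \<pi> y = (\<Sum>m\<in>{1..n}. real (\<pi> m) * Poly_Mapping.lookup y (m - 1))"

lemma phi_add: "phi n \<pi> (x + y) = phi n \<pi> x + phi n \<pi> y"
  by (simp add: phi_def Poly_Mapping.lookup_add distrib_left sum.distrib)

lemma phi_scale: "phi n \<pi> (r *\<^sub>R x) = r * phi n \<pi> x"
  by (simp add: phi_def lookup_scaleR_pm sum_distrib_left algebra_simps)

lemma phi_sum: "phi n \<pi> (sum s I) = (\<Sum>k\<in>I. phi n \<pi> (s k))"
  unfolding phi_def Poly_Mapping.lookup_sum sum_distrib_left by (rule sum.swap)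

lemma phi_Cv: assumes "i \<in> {1..n}" "j \<ge> 1" shows "phi n \<pi> (Cv n i j) = real (\<pi> i)"
proof -
  have "phi n \<pi> (Cv n i j) = (\<Sum>m\<in>{1..n}. if m = i then real (\<pi> m) else 0)"
    unfolding phi_def
    by (rule sum.cong[OF refl]) (use assms in \<open>auto simp: Cv_def Poly_Mapping.lookup_add lookup_std\<close>)
  also have "\<dots> = real (\<pi> i)" using assms by simp
  finally show ?thesis .
qed

lemma seg_max:
  assumes k: "(i, j) \<in> Pairs n" and ne: "\<pi> i \<noteq> \<pi> j"
    and x: "x \<in> convex hull {Cv n i j, Cv n j i}"
  defines "g \<equiv> (if \<pi> j < \<pi> i then Cv n i j else Cv n j i)"
  shows "phi n \<pi> x \<le> phi n \<pi> g \<and> (phi n \<pi> x = phi n \<pi> g \<longrightarrow> x = g)"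
proof -
  have i: "i \<in> {1..n}" and j: "j \<in> {1..n}" using k by (auto simp: Pairs_def)
  obtain u where u: "0 \<le> u" "u \<le> 1" and xu: "x = (1 - u) *\<^sub>R Cv n i j + u *\<^sub>R Cv n j i"
    using x unfolding segment_convex_hull[symmetric] in_segment by blast
  have px: "phi n \<pi> x = (1 - u) * real (\<pi> i) + u * real (\<pi> j)"
    unfolding xu phi_add phi_scale using i j by (simp add: phi_Cv)
  show ?thesis
  proof (cases "\<pi> j < \<pi> i")
    case True
    then have pg: "phi n \<pi> g = real (\<pi> i)" "g = Cv n i j" using i j by (auto simp: g_def phi_Cv)
    have "u * (real (\<pi> i) - real (\<pi> j)) \<ge> 0" using True u by simp
    moreover have pxe: "phi n \<pi> x = real (\<pi> i) - u * (real (\<pi> i) - real (\<pi> j))" unfolding px by (simp add: algebra_simps)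
    ultimately have "phi n \<pi> x \<le> phi n \<pi> g" using pg(1) by linarith
    moreover have "x = g" if "phi n \<pi> x = phi n \<pi> g"
    proof -
      have "u * (real (\<pi> i) - real (\<pi> j)) = 0" using that pg(1) pxe by linarith
      then have "u = 0" using True by simp
      then show ?thesis using pg xu by simp
    qed
    ultimately show ?thesis by blast
  next
    case False
    then have lt: "\<pi> i < \<pi> j" using ne by simp
    then have pg: "phi n \<pi> g = real (\<pi> j)" "g = Cv n j i" using i j False by (auto simp: g_def phi_Cv)
    have "(1 - u) * (real (\<pi> j) - real (\<pi> i)) \<ge> 0" using lt u by simp
    moreover have pxe: "phi n \<pi> x = real (\<pi> j) - (1 - u) * (real (\<pi> j) - real (\<pi> i))" unfolding px by (simp add: algebra_simps)
    ultimately have "phi n \<pi> x \<le> phi n \<pi> g" using pg(1) by linarith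
    moreover have "x = g" if "phi n \<pi> x = phi n \<pi> g"
    proof -
      have "(1 - u) * (real (\<pi> j) - real (\<pi> i)) = 0" using that pg(1) pxe by linarith
      then have "u = 1" using lt by simp
      then show ?thesis using pg xu by simp
    qed
    ultimately show ?thesis by blast
  qed
qed

lemma perm_extreme:
  assumes p: "\<pi> permutes {1..n}"
  shows "(perm_compl_vec n \<pi> - ones_vec n) extreme_point_of Newt n"
proof -
  have bij: "bij_betw \<pi> {1..n} {1..n}" using p by (rule permutes_imp_bij)
  then have inj: "inj_on \<pi> {1..n}" and img: "\<pi> ` {1..n} = {1..n}" by (auto simp: bij_betw_def)
  have rng: "\<pi> a \<in> {1..n}" if "a \<in> {1..n}" for a using img that by blast
  define B where "B a b \<longleftrightarrow> \<pi> b < \<pi> a" for a b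
  define g where "g k = (if B (fst k) (snd k) then Cv n (fst k) (snd k) else Cv n (snd k) (fst k))" for k
  define v where "v = sum g (Pairs n)"
  have vpcv: "v = perm_compl_vec n \<pi> - ones_vec n"
    unfolding v_def g_def
  proof (rule tour_pcv)
    fix a b assume a: "a \<in> {1..n}" and b: "b \<in> {1..n}" and ne: "a \<noteq> b"
    have "\<pi> a \<noteq> \<pi> b" using inj a b ne by (auto dest: inj_onD)
    then show "B a b \<longleftrightarrow> \<not> B b a" unfolding B_def by auto
  next
    fix a show "\<not> B a a" unfolding B_def by simp
  next
    fix a assume a: "a \<in> {1..n}"
    have "\<pi> a \<ge> 1" using rng[OF a] by simp
    then show "real (card {b\<in>{1..n}. B a b}) = real (\<pi> a) - 1"
      unfolding B_def perm_card(1)[OF p a] by (simp add: of_nat_diff)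
  next
    fix a assume a: "a \<in> {1..n}"
    have "\<pi> a \<le> n" using rng[OF a] by simp
    then show "real (card {b\<in>{1..n}. B b a}) = real n - real (\<pi> a)"
      unfolding B_def perm_card(2)[OF p a] by (simp add: of_nat_diff)
  qed
  have gmem: "g k \<in> convex hull {Cv n (fst k) (snd k), Cv n (snd k) (fst k)}" for k
    unfolding g_def by (auto intro: hull_inc)
  have vN: "v \<in> Newt n" unfolding Newt_mem v_def using gmem by blast
  have maxi: "phi n \<pi> y \<le> phi n \<pi> v \<and> (phi n \<pi> y = phi n \<pi> v \<longrightarrow> y = v)" if y: "y \<in> Newt n" for y
  proof -
    obtain s where s: "\<forall>k\<in>Pairs n. s k \<in> convex hull {Cv n (fst k) (snd k), Cv n (snd k) (fst k)}"
      and ys: "y = sum s (Pairs n)" using y unfolding Newt_mem by blast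
    have each: "phi n \<pi> (s k) \<le> phi n \<pi> (g k) \<and> (phi n \<pi> (s k) = phi n \<pi> (g k) \<longrightarrow> s k = g k)"
      if k: "k \<in> Pairs n" for k
    proof -
      obtain i j where kij: "k = (i, j)" by force
      have "i \<in> {1..n}" "j \<in> {1..n}" "i \<noteq> j" using k kij by (auto simp: Pairs_def)
      then have ne: "\<pi> i \<noteq> \<pi> j" using inj by (auto dest: inj_onD)
      show ?thesis
        using seg_max[of i j n \<pi> "s k"] k kij ne s unfolding g_def B_def by auto
    qed
    have le: "phi n \<pi> y \<le> phi n \<pi> v"
      unfolding ys v_def phi_sum by (rule sum_mono) (use each in blast)
    moreover have "y = v" if eq: "phi n \<pi> y = phi n \<pi> v"
    proof -
      have "\<forall>k\<in>Pairs n. phi n \<pi> (s k) = phi n \<pi> (g k)"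
      proof (rule ccontr)
        assume "\<not> ?thesis"
        then obtain k where kP: "k \<in> Pairs n" and kne: "phi n \<pi> (s k) \<noteq> phi n \<pi> (g k)" by blast
        have "phi n \<pi> (s k) \<le> phi n \<pi> (g k)" using each[OF kP] by blast
        then have "phi n \<pi> (s k) < phi n \<pi> (g k)" using kne by simp
        then have "\<exists>k\<in>Pairs n. phi n \<pi> (s k) < phi n \<pi> (g k)" using kP by blast
        then have "(\<Sum>k\<in>Pairs n. phi n \<pi> (s k)) < (\<Sum>k\<in>Pairs n. phi n \<pi> (g k))"
          using each by (intro sum_strict_mono_ex1 finite_Pairs) auto
        then show False using eq unfolding ys v_def phi_sum by simp
      qed
      then have "\<forall>k\<in>Pairs n. s k = g k" using each by blast
      then show ?thesis unfolding ys v_def by (intro sum.cong) auto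
    qed
    ultimately show ?thesis by blast
  qed
  have "v extreme_point_of Newt n"
    unfolding extreme_point_of_def
  proof (intro conjI ballI notI)
    show "v \<in> Newt n" by (rule vN)
  next
    fix a b assume a: "a \<in> Newt n" and b: "b \<in> Newt n" and o: "v \<in> open_segment a b"
    from o obtain u where ab: "a \<noteq> b" and u: "0 < u" "u < 1" and vu: "v = (1 - u) *\<^sub>R a + u *\<^sub>R b"
      unfolding in_segment by blast
    have pv: "phi n \<pi> v = (1 - u) * phi n \<pi> a + u * phi n \<pi> b"
      unfolding vu phi_add phi_scale ..
    have la: "phi n \<pi> a \<le> phi n \<pi> v" and lb: "phi n \<pi> b \<le> phi n \<pi> v" using maxi a b by auto
    have "(1 - u) * phi n \<pi> a \<le> (1 - u) * phi n \<pi> v" using la u by (intro mult_left_mono) auto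
    moreover have "u * phi n \<pi> b \<le> u * phi n \<pi> v" using lb u by (intro mult_left_mono) auto
    moreover have "(1 - u) * phi n \<pi> a < (1 - u) * phi n \<pi> v" if "phi n \<pi> a < phi n \<pi> v"
      using that u by (intro mult_strict_left_mono) auto
    moreover have "u * phi n \<pi> b < u * phi n \<pi> v" if "phi n \<pi> b < phi n \<pi> v"
      using that u by (intro mult_strict_left_mono) auto
    moreover have sv: "(1 - u) * phi n \<pi> v + u * phi n \<pi> v = phi n \<pi> v" by (simp add: algebra_simps)
    ultimately have "phi n \<pi> a = phi n \<pi> v" "phi n \<pi> b = phi n \<pi> v"
      using pv la lb by linarith+
    then have "a = v" "b = v" using maxi a b by auto
    then show False using ab by simp
  qed
  then show ?thesis using vpcv by simp
qed

lemma extreme_perm: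
  assumes n: "n \<ge> 1" and ext: "v extreme_point_of Newt n"
  shows "\<exists>\<pi>. \<pi> permutes {1..n} \<and> v = perm_compl_vec n \<pi> - ones_vec n"
proof -
  define S where "S k = convex hull {Cv n (fst k) (snd k), Cv n (snd k) (fst k)}" for k
  have NS: "Newt n = sum S (Pairs n)" by (simp add: Newt_alt S_def case_prod_beta)
  have "v \<in> Newt n" using ext by (simp add: extreme_point_of_def)
  then obtain s where s: "\<forall>k\<in>Pairs n. s k \<in> S k" and vs: "v = sum s (Pairs n)"
    unfolding Newt_mem S_def by blast
  have ends: "s k \<in> {Cv n (fst k) (snd k), Cv n (snd k) (fst k)}" if k: "k \<in> Pairs n" for k
  proof -
    have "s k extreme_point_of S k"
      using extreme_sum[OF finite_Pairs ext[unfolded NS] s vs k] .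
    then show ?thesis unfolding S_def by (rule extreme_point_of_convex_hull)
  qed
  have mem: "sum t (Pairs n) \<in> Newt n"
    if t: "\<And>k. k \<in> Pairs n \<Longrightarrow> t k \<in> {Cv n (fst k) (snd k), Cv n (snd k) (fst k)}" for t
    unfolding Newt_mem using t by (blast intro: hull_inc)
  define key where "key a b = (min a b, max a b)" for a b :: nat
  have keyP: "key a b \<in> Pairs n" if "a \<in> {1..n}" "b \<in> {1..n}" "a \<noteq> b" for a b
    using that by (auto simp: key_def Pairs_def min_def max_def)
  have keysym: "key a b = key b a" for a b by (auto simp: key_def min_def max_def)
  have keyset: "{Cv n (fst (key a b)) (snd (key a b)), Cv n (snd (key a b)) (fst (key a b))} = {Cv n a b, Cv n b a}" for a b
    by (cases "a \<le> b") (simp_all add: key_def min_def max_def insert_commute)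
  have ends2: "s (key a b) = Cv n a b \<or> s (key a b) = Cv n b a" if "a \<in> {1..n}" "b \<in> {1..n}" "a \<noteq> b" for a b
    using ends[OF keyP[OF that]] unfolding keyset by blast
  define B where "B a b \<longleftrightarrow> a \<noteq> b \<and> s (key a b) = Cv n a b" for a b
  have tour: "B a b \<longleftrightarrow> \<not> B b a" if a: "a \<in> {1..n}" and b: "b \<in> {1..n}" and ne: "a \<noteq> b" for a b
    using ends2[OF a b ne] Cv_neq[OF a b ne] keysym[of a b] ne unfolding B_def by auto
  have irr: "\<not> B a a" for a unfolding B_def by simp
  have sform: "s k = (if B (fst k) (snd k) then Cv n (fst k) (snd k) else Cv n (snd k) (fst k))"
    if k: "k \<in> Pairs n" for k
  proof -
    obtain i j where kij: "k = (i, j)" by force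
    have ij: "i < j" using k kij by (auto simp: Pairs_def)
    then have "key i j = k" using kij by (simp add: key_def)
    have e: "s k = Cv n i j \<or> s k = Cv n j i" using ends[OF k] kij by simp
    show ?thesis
    proof (cases "s k = Cv n i j")
      case True then have "B i j" unfolding B_def using ij \<open>key i j = k\<close> by simp
      then show ?thesis using True kij by simp
    next
      case False then have "\<not> B i j" unfolding B_def using \<open>key i j = k\<close> by simp
      then show ?thesis using False e kij by simp
    qed
  qed
  have no3: False if a: "a \<in> {1..n}" and b: "b \<in> {1..n}" and c: "c \<in> {1..n}"
    and ab: "B a b" and bc: "B b c" and ca: "B c a" for a b c
  proof -
    have nab: "a \<noteq> b" and nbc: "b \<noteq> c" and nca: "c \<noteq> a" using ab bc ca by (auto simp: B_def)
    have d1: "key a b \<noteq> key b c" "key b c \<noteq> key c a" "key a b \<noteq> key c a"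
      using nab nbc nca by (auto simp: key_def min_def max_def split: if_splits)
    have sab: "s (key a b) = Cv n a b" and sbc: "s (key b c) = Cv n b c" and sca: "s (key c a) = Cv n c a"
      using ab bc ca by (auto simp: B_def)
    define D where "D = Cv n a b - Cv n b a"
    have D0: "D \<noteq> 0" using Cv_neq[OF a b nab] by (simp add: D_def)
    define t1 where "t1 = s(key a b := Cv n b a)"
    define t2 where "t2 = s(key b c := Cv n c b, key c a := Cv n a c)"
    have vt: "\<And>k. k \<in> Pairs n \<Longrightarrow> s k \<in> {Cv n (fst k) (snd k), Cv n (snd k) (fst k)}" by (rule ends)
    have t1m: "sum t1 (Pairs n) \<in> Newt n"
    proof (rule mem)
      fix k assume "k \<in> Pairs n"
      then show "t1 k \<in> {Cv n (fst k) (snd k), Cv n (snd k) (fst k)}"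
        using ends keyset[of a b] unfolding t1_def by (cases "k = key a b") auto
    qed
    have t2m: "sum t2 (Pairs n) \<in> Newt n"
    proof (rule mem)
      fix k assume "k \<in> Pairs n"
      then show "t2 k \<in> {Cv n (fst k) (snd k), Cv n (snd k) (fst k)}"
        using ends keyset[of b c] keyset[of c a] unfolding t2_def
        by (cases "k = key b c"; cases "k = key c a") auto
    qed
    have e1: "sum t1 (Pairs n) = v - D"
      unfolding t1_def sum_upd[OF finite_Pairs keyP[OF a b nab]] vs[symmetric] sab D_def
      by (simp add: algebra_simps)
    have "sum t2 (Pairs n) = (v - Cv n b c + Cv n c b) - Cv n c a + Cv n a c"
      unfolding t2_def sum_upd[OF finite_Pairs keyP[OF c a nca]] sum_upd[OF finite_Pairs keyP[OF b c nbc]]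
        vs[symmetric] using d1(2) sbc sca by simp
    also have "\<dots> = v + D" unfolding D_def Cv_def by (simp add: algebra_simps)
    finally have e2: "sum t2 (Pairs n) = v + D" .
    have "v \<in> open_segment (v - D) (v + D)"
      unfolding in_segment
    proof (intro conjI exI[of _ "1/2"])
      have "(2::real) *\<^sub>R D = (v + D) - (v - D)" by (simp add: scaleR_2 algebra_simps)
      then show "v - D \<noteq> v + D" using D0 by auto
      have h1: "(1 - 1/2) *\<^sub>R (v - D) + (1/2) *\<^sub>R (v + D) = (1/2::real) *\<^sub>R ((v - D) + (v + D))"
        unfolding scaleR_add_right by simp
      have h2: "(v - D) + (v + D) = v + v" by (simp only: diff_add_cancel add.assoc[symmetric] diff_add_eq)
      have h3: "(1/2::real) *\<^sub>R (v + v) = v"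
        by (simp only: scaleR_2[symmetric] scaleR_scaleR) simp
      show "v = (1 - 1/2) *\<^sub>R (v - D) + (1/2) *\<^sub>R (v + D)" unfolding h1 h2 h3 ..
    qed simp_all
    moreover have "v - D \<in> Newt n" "v + D \<in> Newt n" using t1m t2m e1 e2 by simp_all
    ultimately show False using ext unfolding extreme_point_of_def by blast
  qed
  have trans: "B a c" if a: "a \<in> {1..n}" and b: "b \<in> {1..n}" and c: "c \<in> {1..n}"
    and ab: "B a b" and bc: "B b c" for a b c
  proof (rule ccontr)
    assume nac: "\<not> B a c"
    have "a \<noteq> b" using ab by (simp add: B_def)
    have "a \<noteq> c"
    proof
      assume "a = c"
      then have "B b a" using bc by simp
      then show False using tour[OF a b \<open>a \<noteq> b\<close>] ab by simp
    qed
    then have "B c a" using tour[OF a c] nac by simp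
    then show False using no3[OF a b c ab bc] by simp
  qed
  define W where "W a = {b\<in>{1..n}. B a b}" for a
  define L where "L a = {b\<in>{1..n}. B b a}" for a
  have finW: "finite (W a)" for a by (simp add: W_def)
  have WL: "card (W a) + card (L a) = n - 1" if a: "a \<in> {1..n}" for a
  proof -
    have "W a \<union> L a = {1..n} - {a}"
      using tour[OF a] irr unfolding W_def L_def by auto
    moreover have "W a \<inter> L a = {}" using tour[OF a] irr unfolding W_def L_def by auto
    ultimately have "card (W a) + card (L a) = card ({1..n} - {a})"
      by (metis card_Un_disjoint finite_Diff finite_Un finite_atLeastAtMost)
    also have "\<dots> = n - 1" using a by simp
    finally show ?thesis .
  qed
  have Wlt: "card (W b) < card (W a)" if a: "a \<in> {1..n}" and b: "b \<in> {1..n}" and ab: "B a b" for a b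
  proof (rule psubset_card_mono[OF finW])
    have "W b \<subseteq> W a" using trans[OF a b] ab unfolding W_def by auto
    moreover have "b \<in> W a" "b \<notin> W b" using ab b irr unfolding W_def by auto
    ultimately show "W b \<subset> W a" by blast
  qed
  define \<pi> where "\<pi> a = (if a \<in> {1..n} then card (W a) + 1 else a)" for a
  have inj: "inj_on \<pi> {1..n}"
  proof (rule inj_onI)
    fix a b assume a: "a \<in> {1..n}" and b: "b \<in> {1..n}" and e: "\<pi> a = \<pi> b"
    show "a = b"
    proof (rule ccontr)
      assume ne: "a \<noteq> b"
      have "B a b \<or> B b a" using tour[OF a b ne] by blast
      then have "card (W b) \<noteq> card (W a)" using Wlt[OF a b] Wlt[OF b a] by auto
      then show False using e a b by (simp add: \<pi>_def)
    qed
  qed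
  have into: "\<pi> ` {1..n} \<subseteq> {1..n}"
  proof
    fix x assume "x \<in> \<pi> ` {1..n}"
    then obtain a where a: "a \<in> {1..n}" and x: "x = \<pi> a" by blast
    have "card (W a) + 1 \<le> n" using WL[OF a] n by linarith
    then show "x \<in> {1..n}" using a x by (simp add: \<pi>_def)
  qed
  have "\<pi> ` {1..n} = {1..n}" by (rule endo_inj_surj[OF _ into inj]) simp
  then have "bij_betw \<pi> {1..n} {1..n}" using inj by (simp add: bij_betw_def)
  then have perm: "\<pi> permutes {1..n}"
    by (rule bij_imp_permutes) (metis \<pi>_def)
  have "v = (\<Sum>k\<in>Pairs n. if B (fst k) (snd k) then Cv n (fst k) (snd k) else Cv n (snd k) (fst k))"
    unfolding vs by (rule sum.cong[OF refl]) (rule sform)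
  also have "\<dots> = perm_compl_vec n \<pi> - ones_vec n"
  proof (rule tour_pcv)
    fix a b assume "a \<in> {1..n}" "b \<in> {1..n}" "a \<noteq> b" then show "B a b \<longleftrightarrow> \<not> B b a" by (rule tour)
  next
    fix a show "\<not> B a a" by (rule irr)
  next
    fix a assume a: "a \<in> {1..n}"
    then show "real (card {b\<in>{1..n}. B a b}) = real (\<pi> a) - 1"
      by (simp add: \<pi>_def W_def)
  next
    fix a assume a: "a \<in> {1..n}"
    have "real (card (L a)) = real n - 1 - real (card (W a))" using WL[OF a] n by linarith
    then show "real (card {b\<in>{1..n}. B b a}) = real n - real (\<pi> a)"
      using a by (simp add: \<pi>_def W_def L_def)
  qed
  finally show ?thesis using perm by blast
qed

theorem mainTheorem4:
  fixes n :: nat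
  assumes "n \<ge> 1"
  shows "{v. v extreme_point_of Newt n} =
         {perm_compl_vec n \<pi> - ones_vec n | \<pi>. \<pi> permutes {1..n}}"
proof
  show "{v. v extreme_point_of Newt n} \<subseteq> {perm_compl_vec n \<pi> - ones_vec n | \<pi>. \<pi> permutes {1..n}}"
    using extreme_perm[OF assms] by blast
  show "{perm_compl_vec n \<pi> - ones_vec n | \<pi>. \<pi> permutes {1..n}} \<subseteq> {v. v extreme_point_of Newt n}"
    using perm_extreme by blast
qed

end
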